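(* Let $(p(i),x(i))_{i\in\mathbb{Z}}$ be real sequences satisfying, for all $i\in\mathbb{Z}$, $$p(i+1)=p(i)-\operatorname{sgn}x(i),\qquad x(i+1)=x(i)+p(i)-\operatorname{sgn}x(i).$$ (1) If $x(K)=0$ for some $K\in\mathbb{Z}$, then $x(K-n)+x(K+n)=0$ for every integer $n\ge 1$. (2) Consequently, if $x(0)=x(K)=0$ for some integer $K\ge 1$, then $x(i+2K)=x(i)$ for all $i\in\mathbb{Z}$.
   Context: Here $\operatorname{sgn}(x)=x/|x|$ for $x\neq 0$ and $\operatorname{sgn}(0)=0$. The recursion is invertible, so a sequence on $\mathbb{Z}$ is determined by its value at any single index; equivalently the $x(i)$ satisfy $-x(i-1)+2x(i)-x(i+1)=\operatorname{sgn}x(i)$ for all $i$. *)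

theory Defs
  imports Complex_Main
begin

end

theory Submission
  imports Defs
begin

lemma recur:
  fixes p x :: "int \<Rightarrow> real"
  assumes hp: "\<And>i. p (i + 1) = p i - sgn (x i)"
      and hx: "\<And>i. x (i + 1) = x i + p i - sgn (x i)"
  shows "x (i + 1) = 2 * x i - x (i - 1) - sgn (x i)"
proof -
  have "x i = x (i - 1) + p (i - 1) - sgn (x (i - 1))" using hx[of "i - 1"] by simp
  moreover have "p i = p (i - 1) - sgn (x (i - 1))" using hp[of "i - 1"] by simp
  ultimately have "p i = x i - x (i - 1)" by simp
  thus ?thesis using hx[of i] by simp
qed

lemma symm:
  fixes p x :: "int \<Rightarrow> real"
  assumes hp: "\<And>i. p (i + 1) = p i - sgn (x i)"
      and hx: "\<And>i. x (i + 1) = x i + p i - sgn (x i)"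
      and z: "x K = 0"
  shows "x (K - int n) = - x (K + int n) \<and> x (K - (int n + 1)) = - x (K + (int n + 1))"
proof (induction n)
  case 0
  have "x (K + 1) = 2 * x K - x (K - 1) - sgn (x K)" by (rule recur[where p=p and x=x, OF hp hx])
  then show ?case using z by simp
next
  case (Suc n)
  have a: "x (K + int n + 2) = 2 * x (K + int n + 1) - x (K + int n) - sgn (x (K + int n + 1))"
    using recur[where p=p and x=x, OF hp hx, of "K + int n + 1"] by (simp add: algebra_simps)
  have b: "x (K - int n - 1 + 1) = 2 * x (K - int n - 1) - x (K - int n - 1 - 1) - sgn (x (K - int n - 1))"
    by (rule recur[where p=p and x=x, OF hp hx])
  have c: "x (K - int n - 2) = 2 * x (K - int n - 1) - x (K - int n) - sgn (x (K - int n - 1))"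
    using b by (simp add: algebra_simps)
  have e1: "x (K - int n) = - x (K + int n)" and e2: "x (K - int n - 1) = - x (K + int n + 1)"
    using Suc by (simp_all add: algebra_simps)
  have "x (K - int n - 2) = - x (K + int n + 2)"
    using a c e1 e2 by (simp add: sgn_minus)
  then show ?case using e2 by (simp add: algebra_simps)
qed

lemma symm_all:
  fixes p x :: "int \<Rightarrow> real"
  assumes hp: "\<And>i. p (i + 1) = p i - sgn (x i)"
      and hx: "\<And>i. x (i + 1) = x i + p i - sgn (x i)"
      and z: "x K = 0"
  shows "x (K - m) + x (K + m) = 0"
proof (cases "m \<ge> 0")
  case True
  then obtain n where "m = int n" by (metis nonneg_int_cases)
  then show ?thesis using symm[where p=p and x=x, OF hp hx z, of n] by simp
next
  case False
  then obtain n where "m = - int n" by (metis linorder_le_cases neg_0_le_iff_le nonneg_int_cases minus_minus)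
  then show ?thesis using symm[where p=p and x=x, OF hp hx z, of n] by simp
qed

theorem mainTheorem2:
  fixes p x :: "int \<Rightarrow> real"
  assumes hp: "\<And>i. p (i + 1) = p i - sgn (x i)"
      and hx: "\<And>i. x (i + 1) = x i + p i - sgn (x i)"
  shows "(\<forall>K. x K = 0 \<longrightarrow> (\<forall>n::int. n \<ge> 1 \<longrightarrow> x (K - n) + x (K + n) = 0))
       \<and> (\<forall>K::int. K \<ge> 1 \<longrightarrow> x 0 = 0 \<longrightarrow> x K = 0 \<longrightarrow> (\<forall>i. x (i + 2 * K) = x i))"
proof (intro conjI allI impI)
  fix K n :: int assume "x K = 0"
  then show "x (K - n) + x (K + n) = 0" by (rule symm_all[where p=p and x=x, OF hp hx])
next
  fix K i :: int assume z0: "x 0 = 0" and zK: "x K = 0"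
  have 1: "x (K - (K + i)) + x (K + (K + i)) = 0" by (rule symm_all[where p=p and x=x, OF hp hx zK])
  have 2: "x (0 - i) + x (0 + i) = 0" by (rule symm_all[where p=p and x=x, OF hp hx z0])
  show "x (i + 2 * K) = x i" using 1 2 by (simp add: algebra_simps)
qed

end
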